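(* Let $f:\mathbb{R}^n\to\mathbb{R}$ be continuously differentiable and bounded below, with $\nabla f$ Lipschitz continuous on $\mathbb{R}^n$ with constant $L(f)$, let $s$ be an integer with $0<s<n$, and let $L>L(f)$. Let $\mathbf{x}^*$ be an optimal solution of the problem (P): minimize $f(\mathbf{x})$ subject to $\|\mathbf{x}\|_0\le s$. Then (i) $\mathbf{x}^*$ is an $L$-stationary point of (P); and (ii) the set $P_{C_s}\!\left(\mathbf{x}^*-\frac1L\nabla f(\mathbf{x}^* )\right)$ consists of exactly one element.
   Context: $\|\mathbf{x}\|_0$ is the number of nonzero components of $\mathbf{x}$ and $C_s=\{\mathbf{x}:\|\mathbf{x}\|_0\le s\}$. For a closed set $D$, $P_D(\mathbf{y})=\operatorname{argmin}_{\mathbf{x}\in D}\|\mathbf{x}-\mathbf{y}\|^2$ (possibly multi-valued). A vector $\mathbf{x}^*\in C_s$ is an $L$-stationary point of (P) if $\mathbf{x}^*\in P_{C_s}\!\left(\mathbf{x}^*-\frac1L\nabla f(\mathbf{x}^* )\right)$. "$\nabla f$ Lipschitz with constant $L(f)$" means $\|\nabla f(\mathbf{x})-\nabla f(\mathbf{y})\|\le L(f)\|\mathbf{x}-\mathbf{y}\|$ for all $\mathbf{x},\mathbf{y}$. *)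

theory Defs
  imports "HOL-Analysis.Analysis"
begin

definition l0norm :: "real ^ 'n \<Rightarrow> nat" where
  "l0norm x = card {i. x $ i \<noteq> 0}"

definition sparse_set :: "nat \<Rightarrow> (real ^ 'n) set" where
  "sparse_set s = {x. l0norm x \<le> s}"

definition proj_set :: "(real ^ 'n) set \<Rightarrow> real ^ 'n \<Rightarrow> (real ^ 'n) set" where
  "proj_set D y = {x \<in> D. \<forall>z \<in> D. (norm (x - y))\<^sup>2 \<le> (norm (z - y))\<^sup>2}"

definition L_stationary :: "real \<Rightarrow> (real ^ 'n \<Rightarrow> real ^ 'n) \<Rightarrow> nat \<Rightarrow> real ^ 'n \<Rightarrow> bool" where
  "L_stationary L g s x \<longleftrightarrow> x \<in> sparse_set s \<and>
     x \<in> proj_set (sparse_set s) (x - (1 / L) *\<^sub>R g x)"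

end

theory Submission
  imports Defs
begin

lemma descent:
  fixes f :: "real ^ 'n \<Rightarrow> real" and g :: "real ^ 'n \<Rightarrow> real ^ 'n"
  assumes grad: "\<And>x. (f has_derivative (\<lambda>h. g x \<bullet> h)) (at x)"
    and lip: "\<And>x y. norm (g x - g y) \<le> Lf * norm (x - y)"
  shows "f y \<le> f x + g x \<bullet> (y - x) + Lf / 2 * (norm (y - x))\<^sup>2"
proof -
  define d where "d = y - x"
  define \<phi> where "\<phi> t = f (x + t *\<^sub>R d) - t * (g x \<bullet> d) - Lf / 2 * t\<^sup>2 * (norm d)\<^sup>2" for t
  have D: "(\<phi> has_real_derivative ((g (x + t *\<^sub>R d) - g x) \<bullet> d - Lf * t * (norm d)\<^sup>2)) (at t)" for t
  proof -
    have l: "((\<lambda>t. x + t *\<^sub>R d) has_derivative (\<lambda>h. h *\<^sub>R d)) (at t)"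
      by (auto intro!: derivative_eq_intros)
    have c: "((\<lambda>t. f (x + t *\<^sub>R d)) has_derivative (\<lambda>h. g (x + t *\<^sub>R d) \<bullet> (h *\<^sub>R d))) (at t)"
      using has_derivative_compose[OF l grad] .
    have c2: "((\<lambda>t. f (x + t *\<^sub>R d)) has_real_derivative (g (x + t *\<^sub>R d) \<bullet> d)) (at t)"
    proof -
      have e: "(\<lambda>h. g (x + t *\<^sub>R d) \<bullet> (h *\<^sub>R d)) = (*) (g (x + t *\<^sub>R d) \<bullet> d)"
        by (rule ext) (simp add: mult.commute)
      show ?thesis unfolding has_field_derivative_def using c unfolding e .
    qed
    have c3: "((\<lambda>t. t * (g x \<bullet> d)) has_real_derivative (g x \<bullet> d)) (at t)"
      using DERIV_cmult_right[OF DERIV_ident, of "g x \<bullet> d"] by simp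
    have c4: "((\<lambda>t. Lf / 2 * t\<^sup>2 * (norm d)\<^sup>2) has_real_derivative (Lf * t * (norm d)\<^sup>2)) (at t)"
      by (auto intro!: derivative_eq_intros simp: algebra_simps)
    have "(\<phi> has_real_derivative (g (x + t *\<^sub>R d) \<bullet> d - g x \<bullet> d - Lf * t * (norm d)\<^sup>2)) (at t)"
      unfolding \<phi>_def by (intro DERIV_diff c2 c3 c4)
    then show ?thesis by (simp add: inner_diff_left)
  qed
  have "\<phi> 1 \<le> \<phi> 0"
  proof (rule DERIV_nonpos_imp_nonincreasing[of 0 1])
    fix t :: real assume t: "0 \<le> t" "t \<le> 1"
    have "(g (x + t *\<^sub>R d) - g x) \<bullet> d \<le> norm (g (x + t *\<^sub>R d) - g x) * norm d"
      by (rule norm_cauchy_schwarz)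
    also have "\<dots> \<le> (Lf * norm (t *\<^sub>R d)) * norm d"
      using lip[of "x + t *\<^sub>R d" x] by (intro mult_right_mono) auto
    also have "\<dots> = Lf * t * (norm d)\<^sup>2" using t by (simp add: power2_eq_square)
    finally show "\<exists>y. DERIV \<phi> t :> y \<and> y \<le> 0" using D[of t] by auto
  qed simp
  then show ?thesis unfolding \<phi>_def d_def by (simp add: algebra_simps)
qed

lemma sparse_closed: "closed (sparse_set s :: (real ^ 'n) set)"
proof -
  have eq: "sparse_set s = (\<Union>I\<in>{I. card I \<le> s}. {x :: real ^ 'n. \<forall>i\<in>-I. x $ i = 0})"
  proof (intro set_eqI iffI)
    fix x :: "real ^ 'n" assume "x \<in> sparse_set s"
    then show "x \<in> (\<Union>I\<in>{I. card I \<le> s}. {x. \<forall>i\<in>-I. x $ i = 0})"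
      unfolding sparse_set_def l0norm_def by (intro UN_I[of "{i. x $ i \<noteq> 0}"]) auto
  next
    fix x :: "real ^ 'n" assume "x \<in> (\<Union>I\<in>{I. card I \<le> s}. {x. \<forall>i\<in>-I. x $ i = 0})"
    then obtain I where I: "card I \<le> s" "\<forall>i\<in>-I. x $ i = 0" by auto
    have "card {i. x $ i \<noteq> 0} \<le> card I" using I by (intro card_mono) auto
    then show "x \<in> sparse_set s" using I unfolding sparse_set_def l0norm_def by auto
  qed
  have "closed {x :: real ^ 'n. \<forall>i\<in>-I. x $ i = 0}" for I
  proof -
    have "{x :: real ^ 'n. \<forall>i\<in>-I. x $ i = 0} = (\<Inter>i\<in>-I. {x. x $ i = 0})" by auto
    moreover have "closed {x :: real ^ 'n. x $ i = 0}" for i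
      by (intro closed_Collect_eq continuous_intros)
    ultimately show ?thesis by auto
  qed
  then show ?thesis unfolding eq by (intro closed_UN) auto
qed

theorem theorem2p2:
  fixes f :: "real ^ 'n \<Rightarrow> real"
    and g :: "real ^ 'n \<Rightarrow> real ^ 'n"
    and Lf L :: real and s :: nat and xstar :: "real ^ 'n"
  assumes grad: "\<And>x. (f has_derivative (\<lambda>h. g x \<bullet> h)) (at x)"
    and cont: "continuous_on UNIV g"
    and bdd: "bdd_below (range f)"
    and lip: "\<And>x y. norm (g x - g y) \<le> Lf * norm (x - y)"
    and s_pos: "0 < s" and s_lt: "s < CARD('n)"
    and L_gt: "L > Lf"
    and opt_feas: "xstar \<in> sparse_set s"
    and opt: "\<And>x. x \<in> sparse_set s \<Longrightarrow> f xstar \<le> f x"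
  shows "L_stationary L g s xstar \<and>
         (\<exists>!z. z \<in> proj_set (sparse_set s) (xstar - (1 / L) *\<^sub>R g xstar))"
proof -
  define y where "y = xstar - (1 / L) *\<^sub>R g xstar"
  have Lf0: "Lf \<ge> 0"
  proof -
    define a :: "real ^ 'n" where "a = axis undefined 1"
    define b :: "real ^ 'n" where "b = 0"
    have "a \<noteq> b" unfolding a_def b_def by (simp add: axis_eq_0_iff)
    then have "0 < norm (a - b)" by simp
    moreover have "0 \<le> Lf * norm (a - b)"
      using lip[of a b] norm_ge_zero[of "g a - g b"] by linarith
    ultimately show ?thesis by (simp add: zero_le_mult_iff)
  qed
  have L0: "L > 0" using Lf0 L_gt by linarith
  have all: "z = xstar" if z: "z \<in> proj_set (sparse_set s) y" for z
  proof -
    have zC: "z \<in> sparse_set s" and zmin: "(norm (z - y))\<^sup>2 \<le> (norm (xstar - y))\<^sup>2"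
      using z opt_feas unfolding proj_set_def by auto
    define e where "e = z - xstar"
    have zy: "z - y = e + (1/L) *\<^sub>R g xstar" unfolding y_def e_def by simp
    have "(norm (z - y))\<^sup>2 = (norm e)\<^sup>2 + 2 / L * (g xstar \<bullet> e) + (norm ((1/L) *\<^sub>R g xstar))\<^sup>2"
    proof -
      have i: "e \<bullet> ((1/L) *\<^sub>R g xstar) = (1/L) * (g xstar \<bullet> e)"
        by (simp only: inner_scaleR_right inner_commute[of e])
      have "e \<bullet> ((1/L) *\<^sub>R g xstar) = ((norm (e + (1/L) *\<^sub>R g xstar))\<^sup>2 - (norm e)\<^sup>2 - (norm ((1/L) *\<^sub>R g xstar))\<^sup>2) / 2"
        by (rule dot_norm)
      moreover have "2 / L * (g xstar \<bullet> e) = 2 * (1 / L * (g xstar \<bullet> e))" by simp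
      moreover have "\<And>N a b p q :: real. p = (N - a - b) / 2 \<Longrightarrow> q = 2 * p \<Longrightarrow> N = a + q + b"
        by (simp add: field_simps)
      ultimately show ?thesis unfolding zy i by blast
    qed
    moreover have "(norm (xstar - y))\<^sup>2 = (norm ((1/L) *\<^sub>R g xstar))\<^sup>2" unfolding y_def by simp
    ultimately have h: "(norm e)\<^sup>2 + 2 / L * (g xstar \<bullet> e) \<le> 0" using zmin by linarith
    have "L / 2 * ((norm e)\<^sup>2 + 2 / L * (g xstar \<bullet> e)) \<le> 0"
      using h L0 by (intro mult_nonneg_nonpos) auto
    moreover have "L / 2 * ((norm e)\<^sup>2 + 2 / L * (g xstar \<bullet> e)) = L / 2 * (norm e)\<^sup>2 + g xstar \<bullet> e"
      using L0 by (simp add: field_simps)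
    ultimately have ge: "g xstar \<bullet> e \<le> - (L / 2 * (norm e)\<^sup>2)" by linarith
    have d: "f z \<le> f xstar + g xstar \<bullet> e + Lf / 2 * (norm e)\<^sup>2"
      unfolding e_def by (rule descent[OF grad lip])
    have o: "f xstar \<le> f z" using opt zC .
    have eq: "(L - Lf) / 2 * (norm e)\<^sup>2 = L / 2 * (norm e)\<^sup>2 - Lf / 2 * (norm e)\<^sup>2"
      by (simp only: diff_divide_distrib left_diff_distrib)
    have "(L - Lf) / 2 * (norm e)\<^sup>2 \<le> 0" using ge d o eq by linarith
    moreover have "(L - Lf) / 2 > 0" using L_gt by simp
    ultimately have "(norm e)\<^sup>2 \<le> 0"
      by (metis mult_le_0_iff not_le)
    then show ?thesis unfolding e_def by simp
  qed
  have ne: "sparse_set s \<noteq> ({} :: (real ^ 'n) set)" using opt_feas by blast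
  have cl: "closed (sparse_set s :: (real ^ 'n) set)" by (rule sparse_closed)
  obtain z where "z \<in> sparse_set s" and zd: "\<And>w. w \<in> sparse_set s \<Longrightarrow> dist y z \<le> dist y w"
    using distance_attains_inf[OF cl ne, of y] by blast
  then have zin: "z \<in> proj_set (sparse_set s) y"
  proof -
    have "(norm (z - y))\<^sup>2 \<le> (norm (w - y))\<^sup>2" if "w \<in> sparse_set s" for w
    proof -
      have "norm (z - y) \<le> norm (w - y)" using zd[OF that]
        by (simp add: dist_norm norm_minus_commute)
      then show ?thesis by (intro power_mono) auto
    qed
    then show ?thesis unfolding proj_set_def using \<open>z \<in> sparse_set s\<close> by blast
  qed
  have xs: "xstar \<in> proj_set (sparse_set s) y" using zin all[OF zin] by simp
  have "L_stationary L g s xstar" unfolding L_stationary_def y_def[symmetric] using opt_feas xs by (rule conjI)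
  moreover have "\<exists>!z. z \<in> proj_set (sparse_set s) y"
  proof (rule ex1I[of _ xstar])
    show "xstar \<in> proj_set (sparse_set s) y" by (rule xs)
  next
    fix w assume "w \<in> proj_set (sparse_set s) y"
    then show "w = xstar" by (rule all)
  qed
  ultimately show ?thesis unfolding y_def by (rule conjI)
qed

end
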